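(* Let $f$ be a Hamiltonian stationary torus. For every monochromatic holomorphic section $\alpha$ there is a unique $\mu\in\mathbb C_*$ such that $\alpha$ is $d^\mu$--parallel.
   Context: Identify $\mathbb R^4$ with $\mathbb H$ and $\mathbb C$ with $\mathrm{span}_{\mathbb R}\{1,i\}$; $\langle\cdot,\cdot\rangle$ is the Euclidean inner product on $\mathbb C\cong\mathbb R^2$. $\Gamma\subset\mathbb C$ a lattice, $\Gamma^*$ its dual lattice. A Hamiltonian stationary torus is a $\Gamma$-periodic conformal immersion $f:\mathbb C\to\mathbb H$ with $df=e^{j\beta/2}dz\,g$, $dz=dx+i\,dy$, $g$ nowhere zero, $\beta(z)=2\pi\langle\beta_0,z\rangle$, $0\ne\beta_0\in\Gamma^*$; convention $*dz=i\,dz$; left normal $N=e^{j\beta}i$. With $(dN)'=\frac12(dN-N*dN)$ define $H$ by $(dN)'=-df\,H$. For $\mu\in\mathbb C_*$, $d^\mu\alpha=d\alpha+\frac12df\,H\,(N\alpha(a-1)+\alpha b)$, $a=\frac{\mu+\mu^{-1}}2$, $b=\frac{\mu^{-1}-\mu}2i$ (acting from the right). With $h^{A,B}(\gamma)=e^{2\pi(\langle A,\gamma\rangle-i\langle B,\gamma\rangle)}$, $\Gamma^*_{A,B}=\{\delta\in\Gamma^*+\frac{\beta_0}2:|\delta-B|^2-|A|^2=\frac{|\beta_0|^2}4,\ \langle\delta-B,A\rangle=0\}$, $e_\delta(z)=e^{2\pi i\langle\delta,z\rangle}$, $\lambda_\delta=\frac2{\beta_0}(\delta-iA-B)$: a monochromatic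 holomorphic section is a nonzero complex multiple (on the right) of $e^{j\beta/2}(1-k\lambda_\delta)e_{\delta-B}e^{2\pi\langle A,\cdot\rangle}$ for some $(A,B)\in\mathbb C^2$ and $\delta\in\Gamma^*_{A,B}$. *)

theory Defs
  imports "HOL-Analysis.Analysis"
begin

text \<open>We model the quaternions H = R^4 as pairs of complex numbers, (a, b) standing for
  a + j b with a, b in C = span{1,i}.  This identifies C with span{1,i} (as the pairs (z,0)),
  and the real vector space / norm structure is the Euclidean one on R^4.
  Using a j = j (cnj a), the product is
  (a + j b)(c + j d) = (a c - cnj b d) + j (cnj a d + b c).\<close>

type_synonym quat = "complex \<times> complex"

definition qmul :: "quat \<Rightarrow> quat \<Rightarrow> quat" where
  "qmul p q = (fst p * fst q - cnj (snd p) * snd q, cnj (fst p) * snd q + snd p * fst q)"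

definition of_cplx :: "complex \<Rightarrow> quat" where
  "of_cplx z = (z, 0)"

definition qone :: quat where "qone = (1, 0)"
definition qi :: quat where "qi = (\<i>, 0)"
definition qj :: quat where "qj = (0, 1)"
definition qk :: quat where "qk = qmul qi qj"   \<comment> \<open>= (0, - i)\<close>

definition qexpj :: "real \<Rightarrow> quat" where
  "qexpj t = (complex_of_real (cos t), complex_of_real (sin t))"

definition lattice :: "complex set \<Rightarrow> bool" where
  "lattice \<Gamma> \<longleftrightarrow> (\<exists>\<omega>1 \<omega>2. Im (cnj \<omega>1 * \<omega>2) \<noteq> 0 \<and>
      \<Gamma> = {of_int m * \<omega>1 + of_int n * \<omega>2 | m n. True})"

text \<open>Dual lattice w.r.t. the Euclidean inner product on C = R^2 (x \<bullet> y = Re (x * cnj y)).\<close>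
definition dual_lattice :: "complex set \<Rightarrow> complex set" where
  "dual_lattice \<Gamma> = {\<delta>. \<forall>\<gamma>\<in>\<Gamma>. \<delta> \<bullet> \<gamma> \<in> \<int>}"

definition hs_beta :: "complex \<Rightarrow> complex \<Rightarrow> real" where
  "hs_beta \<beta>0 z = 2 * pi * (\<beta>0 \<bullet> z)"

text \<open>f is a Hamiltonian stationary torus w.r.t. the lattice Gamma, with data beta0 and g:
  Gamma-periodic, df = e^{j beta/2} dz g with g nowhere zero (this makes f a conformal immersion).\<close>
definition ham_stat_torus ::
    "complex set \<Rightarrow> complex \<Rightarrow> (complex \<Rightarrow> quat) \<Rightarrow> (complex \<Rightarrow> quat) \<Rightarrow> bool" where
  "ham_stat_torus \<Gamma> \<beta>0 f g \<longleftrightarrow>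
     lattice \<Gamma> \<and> \<beta>0 \<in> dual_lattice \<Gamma> \<and> \<beta>0 \<noteq> 0 \<and>
     (\<forall>\<gamma>\<in>\<Gamma>. \<forall>z. f (z + \<gamma>) = f z) \<and>
     (\<forall>z. g z \<noteq> 0) \<and>
     (\<forall>z. (f has_derivative
            (\<lambda>v. qmul (qmul (qexpj (hs_beta \<beta>0 z / 2)) (of_cplx v)) (g z))) (at z))"

definition hs_N :: "complex \<Rightarrow> complex \<Rightarrow> quat" where
  "hs_N \<beta>0 z = qmul (qexpj (hs_beta \<beta>0 z)) qi"

text \<open>Quaternion-valued 1-forms on C are modelled as functions (point z, tangent vector v).  Hodge star with the
  convention *dz = i dz: ( *w)_z(v) = w_z(i v).\<close>
definition dform :: "(complex \<Rightarrow> quat) \<Rightarrow> complex \<Rightarrow> complex \<Rightarrow> quat" where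
  "dform F z v = frechet_derivative F (at z) v"

definition hodge :: "(complex \<Rightarrow> complex \<Rightarrow> quat) \<Rightarrow> complex \<Rightarrow> complex \<Rightarrow> quat" where
  "hodge w z v = w z (\<i> * v)"

definition dN_prime :: "complex \<Rightarrow> complex \<Rightarrow> complex \<Rightarrow> quat" where
  "dN_prime \<beta>0 z v = (1/2::real) *\<^sub>R
     (dform (hs_N \<beta>0) z v - qmul (hs_N \<beta>0 z) (hodge (dform (hs_N \<beta>0)) z v))"

definition hs_H :: "complex \<Rightarrow> (complex \<Rightarrow> quat) \<Rightarrow> complex \<Rightarrow> quat" where
  "hs_H \<beta>0 f z = (THE h. \<forall>v. dN_prime \<beta>0 z v = - qmul (dform f z v) h)"

definition mu_a :: "complex \<Rightarrow> complex" where "mu_a \<mu> = (\<mu> + inverse \<mu>) / 2"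
definition mu_b :: "complex \<Rightarrow> complex" where "mu_b \<mu> = (inverse \<mu> - \<mu>) / 2 * \<i>"

definition d_mu :: "complex \<Rightarrow> (complex \<Rightarrow> quat) \<Rightarrow> complex \<Rightarrow> (complex \<Rightarrow> quat)
                    \<Rightarrow> complex \<Rightarrow> complex \<Rightarrow> quat" where
  "d_mu \<beta>0 f \<mu> \<alpha> z v = dform \<alpha> z v + (1/2::real) *\<^sub>R
     qmul (qmul (dform f z v) (hs_H \<beta>0 f z))
       (qmul (qmul (hs_N \<beta>0 z) (\<alpha> z)) (of_cplx (mu_a \<mu> - 1)) + qmul (\<alpha> z) (of_cplx (mu_b \<mu>)))"

definition d_mu_parallel :: "complex \<Rightarrow> (complex \<Rightarrow> quat) \<Rightarrow> complex \<Rightarrow> (complex \<Rightarrow> quat) \<Rightarrow> bool" where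
  "d_mu_parallel \<beta>0 f \<mu> \<alpha> \<longleftrightarrow>
     (\<forall>z. \<alpha> differentiable (at z)) \<and> (\<forall>z v. d_mu \<beta>0 f \<mu> \<alpha> z v = 0)"

definition Gamma_AB :: "complex set \<Rightarrow> complex \<Rightarrow> complex \<Rightarrow> complex \<Rightarrow> complex set" where
  "Gamma_AB \<Gamma> \<beta>0 A B = {\<delta>. (\<exists>\<gamma>'\<in>dual_lattice \<Gamma>. \<delta> = \<gamma>' + \<beta>0 / 2) \<and>
      (cmod (\<delta> - B))\<^sup>2 - (cmod A)\<^sup>2 = (cmod \<beta>0)\<^sup>2 / 4 \<and> (\<delta> - B) \<bullet> A = 0}"

definition e_char :: "complex \<Rightarrow> complex \<Rightarrow> complex" where
  "e_char \<delta> z = exp (2 * pi * \<i> * complex_of_real (\<delta> \<bullet> z))"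

definition lambda_delta :: "complex \<Rightarrow> complex \<Rightarrow> complex \<Rightarrow> complex \<Rightarrow> complex" where
  "lambda_delta \<beta>0 A B \<delta> = 2 / \<beta>0 * (\<delta> - \<i> * A - B)"

definition monochromatic :: "complex set \<Rightarrow> complex \<Rightarrow> (complex \<Rightarrow> quat) \<Rightarrow> bool" where
  "monochromatic \<Gamma> \<beta>0 \<alpha> \<longleftrightarrow>
     (\<exists>A B \<delta> c. \<delta> \<in> Gamma_AB \<Gamma> \<beta>0 A B \<and> c \<noteq> 0 \<and>
        \<alpha> = (\<lambda>z. qmul (qmul (qmul (qmul (qexpj (hs_beta \<beta>0 z / 2))
                     (qone - qmul qk (of_cplx (lambda_delta \<beta>0 A B \<delta>))))
                     (of_cplx (e_char (\<delta> - B) z)))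
                     (of_cplx (complex_of_real (exp (2 * pi * (A \<bullet> z))))))
                     (of_cplx c)))"

end

theory Submission
  imports Defs
begin

abbreviation cr :: "real \<Rightarrow> complex" where "cr \<equiv> complex_of_real"

lemma cinner: "cr (x \<bullet> y) = (x * cnj y + cnj x * y) / 2"
  by (simp add: inner_complex_def complex_eq_iff)

lemma dNp_alg:
  fixes cn sn :: real and b0 v :: complex
  assumes cs: "cn^2 + sn^2 = 1"
  shows "(1/2::real) *\<^sub>R ((- \<i> * cr (2* sn* cn) * cr (2* pi*(b0 \<bullet> v)), \<i> * cr (cn^2-sn^2) * cr (2* pi*(b0 \<bullet> v)))
     - qmul (\<i> * cr (cn^2-sn^2), \<i> * cr (2* sn* cn)) (- \<i> * cr (2* sn* cn) * cr (2* pi*(b0 \<bullet> (\<i>* v))), \<i> * cr (cn^2-sn^2) * cr (2* pi*(b0 \<bullet> (\<i>* v)))))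
    = - qmul (qmul (cr cn, cr sn) (v,0)) (cr pi * \<i> * cnj b0 * cr sn, - cr pi * \<i> * b0 * cr cn)"
proof -
  have cs': "cr cn ^ 2 + cr sn ^ 2 = 1" using cs by (metis of_real_add of_real_power of_real_1)
  show ?thesis
    apply (simp add: qmul_def cinner scaleR_conv_of_real)
    apply (rule conjI)
    using cs' by (simp add: field_simps power2_eq_square; algebra)+
qed

definition dexpr :: "real \<Rightarrow> real \<Rightarrow> complex \<Rightarrow> complex \<Rightarrow> complex \<Rightarrow> complex \<Rightarrow> complex \<Rightarrow> complex \<Rightarrow> complex \<Rightarrow> quat" where
  "dexpr cn sn b0 D A l mu ph v = (let C = cr cn; S = cr sn;
     P = 2 * cr pi * \<i> * cr (D \<bullet> v) + 2 * cr pi * cr (A \<bullet> v);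
     C' = - S * cr pi * cr (b0 \<bullet> v); S' = C * cr pi * cr (b0 \<bullet> v);
     M = qmul (qmul (C, S) (v,0)) (cr pi * \<i> * cnj b0 * S, - cr pi * \<i> * b0 * C);
     al = ((C - \<i> * l * S) * ph, (\<i> * l * C + S) * ph);
     N = (\<i> * (C^2 - S^2), \<i> * (2 * S * C))
   in ((C' - \<i> * l * S') * ph + (C - \<i> * l * S) * (ph * P), (\<i> * l * C' + S') * ph + (\<i> * l * C + S) * (ph * P))
     + (1/2::real) *\<^sub>R qmul M (qmul (qmul N al) (of_cplx (mu_a mu - 1)) + qmul al (of_cplx (mu_b mu))))"

lemma dmu_alg:
  fixes cn sn :: real and b0 v D A l mu ph :: complex
  assumes cs: "cn^2 + sn^2 = 1"
    and lb: "l * b0 = 2 * (D - \<i> * A)"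
    and E: "(D - \<i> * A) * (cnj D - \<i> * cnj A) = b0 * cnj b0 / 4"
    and mu: "mu * l^2 = 1" and b0: "b0 \<noteq> 0"
  shows "dexpr cn sn b0 D A l mu ph v = 0"
proof -
  have cs': "cr cn ^ 2 + cr sn ^ 2 = 1" using cs by (metis of_real_add of_real_power of_real_1)
  have i2: "\<i> * \<i> = -1" by simp
  have bi: "b0 * inverse b0 = 1" using b0 by simp
  have mi: "inverse mu = l^2" using mu by (metis inverse_unique mult.commute)
  show ?thesis
    unfolding dexpr_def Let_def
    apply (simp add: qmul_def cinner scaleR_conv_of_real of_cplx_def mu_a_def mu_b_def mi zero_prod_def)
    apply (rule conjI)
    using cs' lb E bi mu i2 by (simp add: field_simps power2_eq_square; algebra)+
qed

lemma uniq_alg: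
  fixes b0 D A l mu ph v :: complex
  assumes lb: "l * b0 = 2 * (D - \<i> * A)"
    and E: "(D - \<i> * A) * (cnj D - \<i> * cnj A) = b0 * cnj b0 / 4"
    and b0: "b0 \<noteq> 0"
  shows "snd (dexpr 1 0 b0 D A l mu ph v) = cr pi * ph * b0 * (inverse mu - l^2) * cnj v / 2"
proof -
  have i2: "\<i> * \<i> = -1" by simp
  have bi: "b0 * inverse b0 = 1" using b0 by simp
  show ?thesis
    unfolding dexpr_def Let_def
    apply (simp add: qmul_def cinner scaleR_conv_of_real of_cplx_def mu_a_def mu_b_def)
    using lb E bi i2 by (simp add: field_simps power2_eq_square; algebra)
qed

definition phi :: "complex \<Rightarrow> complex \<Rightarrow> complex \<Rightarrow> complex \<Rightarrow> complex" where
  "phi D A c z = e_char D z * cr (exp (2 * pi * (A \<bullet> z))) * c"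

lemma phi_eq: "phi D A c = (\<lambda>z. c * exp (cr (2 * pi * (A \<bullet> z)) + 2 * cr pi * \<i> * cr (D \<bullet> z)))"
proof
  fix z
  have "cr (exp (2 * pi * (A \<bullet> z))) = exp (cr (2 * pi * (A \<bullet> z)))" by (simp only: exp_of_real)
  thus "phi D A c z = c * exp (cr (2 * pi * (A \<bullet> z)) + 2 * cr pi * \<i> * cr (D \<bullet> z))"
    unfolding phi_def e_char_def exp_add by (simp add: algebra_simps)
qed

lemma phi_deriv: "(phi D A c has_derivative
   (\<lambda>v. phi D A c z * (2 * cr pi * \<i> * cr (D \<bullet> v) + 2 * cr pi * cr (A \<bullet> v)))) (at z)"
proof -
  let ?Q = "\<lambda>z. cr (2 * pi * (A \<bullet> z)) + 2 * cr pi * \<i> * cr (D \<bullet> z)"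
  have Q: "(?Q has_derivative ?Q) (at z)"
    by (rule has_derivative_eq_rhs, (rule derivative_eq_intros refl)+, auto simp: algebra_simps)
  have e: "(exp has_derivative (\<lambda>h. exp (?Q z) * h)) (at (?Q z))"
    using DERIV_exp[of "?Q z"] by (simp add: has_field_derivative_def)
  have "((exp \<circ> ?Q) has_derivative ((\<lambda>h. exp (?Q z) * h) \<circ> ?Q)) (at z)"
    by (rule diff_chain_at[OF Q e])
  hence "((\<lambda>z. c * exp (?Q z)) has_derivative (\<lambda>v. c * (exp (?Q z) * ?Q v))) (at z)"
    using has_derivative_mult_right[of "exp \<circ> ?Q" _ _ c] by (simp add: o_def)
  thus ?thesis unfolding phi_eq
    by (rule has_derivative_eq_rhs) (auto simp: algebra_simps)
qed

lemma C_deriv: "((\<lambda>z. cr (cos (pi * (b0 \<bullet> z)))) has_derivative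
   (\<lambda>v. - cr (sin (pi * (b0 \<bullet> z))) * cr pi * cr (b0 \<bullet> v))) (at z)"
  by (rule has_derivative_eq_rhs, (rule derivative_eq_intros refl)+, auto simp: algebra_simps)

lemma S_deriv: "((\<lambda>z. cr (sin (pi * (b0 \<bullet> z)))) has_derivative
   (\<lambda>v. cr (cos (pi * (b0 \<bullet> z))) * cr pi * cr (b0 \<bullet> v))) (at z)"
  by (rule has_derivative_eq_rhs, (rule derivative_eq_intros refl)+, auto simp: algebra_simps)

definition alx :: "complex \<Rightarrow> complex \<Rightarrow> complex \<Rightarrow> complex \<Rightarrow> complex \<Rightarrow> complex \<Rightarrow> quat" where
  "alx l b0 D A c z = ((cr (cos (pi * (b0 \<bullet> z))) - \<i> * l * cr (sin (pi * (b0 \<bullet> z)))) * phi D A c z,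
      (\<i> * l * cr (cos (pi * (b0 \<bullet> z))) + cr (sin (pi * (b0 \<bullet> z)))) * phi D A c z)"

lemma alx_deriv: "(alx l b0 D A c has_derivative (\<lambda>v.
   ((- cr (sin (pi * (b0 \<bullet> z))) * cr pi * cr (b0 \<bullet> v) - \<i> * l * (cr (cos (pi * (b0 \<bullet> z))) * cr pi * cr (b0 \<bullet> v))) * phi D A c z
      + (cr (cos (pi * (b0 \<bullet> z))) - \<i> * l * cr (sin (pi * (b0 \<bullet> z)))) * (phi D A c z * (2 * cr pi * \<i> * cr (D \<bullet> v) + 2 * cr pi * cr (A \<bullet> v))),
    (\<i> * l * (- cr (sin (pi * (b0 \<bullet> z))) * cr pi * cr (b0 \<bullet> v)) + cr (cos (pi * (b0 \<bullet> z))) * cr pi * cr (b0 \<bullet> v)) * phi D A c z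
      + (\<i> * l * cr (cos (pi * (b0 \<bullet> z))) + cr (sin (pi * (b0 \<bullet> z)))) * (phi D A c z * (2 * cr pi * \<i> * cr (D \<bullet> v) + 2 * cr pi * cr (A \<bullet> v)))))) (at z)"
  unfolding alx_def[abs_def]
  by (rule has_derivative_eq_rhs, (rule derivative_eq_intros phi_deriv C_deriv S_deriv refl)+, auto simp: algebra_simps)



lemma qmul_assoc: "qmul (qmul p q) r = qmul p (qmul q r)"
  by (simp add: qmul_def algebra_simps)

lemma qmul_zero_right[simp]: "qmul p 0 = 0"
  by (simp add: qmul_def zero_prod_def)

lemma qmul_qone_left[simp]: "qmul qone p = p"
  by (simp add: qmul_def qone_def)

definition qn :: "quat \<Rightarrow> complex" where
  "qn p = fst p * cnj (fst p) + snd p * cnj (snd p)"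

definition qinv :: "quat \<Rightarrow> quat" where
  "qinv p = (cnj (fst p) / qn p, - snd p / qn p)"

lemma qn_real: "qn p = cr ((cmod (fst p))^2 + (cmod (snd p))^2)"
  unfolding qn_def of_real_add complex_norm_square ..

lemma qn_nz: "p \<noteq> 0 \<Longrightarrow> qn p \<noteq> 0"
proof
  assume p: "p \<noteq> 0" and q: "qn p = 0"
  have "(cmod (fst p))^2 + (cmod (snd p))^2 = 0" using q unfolding qn_real of_real_eq_0_iff by assumption
  hence "fst p = 0 \<and> snd p = 0"
    by (metis add_nonneg_eq_0_iff norm_eq_zero zero_le_power2 power_eq_0_iff)
  with p show False by (simp add: prod_eq_iff)
qed

lemma qn_cnj: "cnj (qn p) = qn p"
  by (simp add: qn_def)

lemma qinv_left: "p \<noteq> 0 \<Longrightarrow> qmul (qinv p) p = qone"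
proof -
  assume p: "p \<noteq> 0"
  have n: "qn p \<noteq> 0" using qn_nz[OF p] .
  have nc: "cnj (qn p) = qn p" by (rule qn_cnj)
  show ?thesis
    using n nc unfolding qmul_def qinv_def qone_def
    by (simp add: field_simps qn_def[symmetric])
qed

lemma qinv_right: "p \<noteq> 0 \<Longrightarrow> qmul p (qinv p) = qone"
proof -
  assume p: "p \<noteq> 0"
  have n: "qn p \<noteq> 0" using qn_nz[OF p] .
  show ?thesis
    using n unfolding qmul_def qinv_def qone_def
    by (simp add: field_simps) (simp add: qn_def algebra_simps)
qed

lemma qmul_cancel: "p \<noteq> 0 \<Longrightarrow> qmul p h1 = qmul p h2 \<Longrightarrow> h1 = h2"
  by (metis qinv_left qmul_assoc qmul_qone_left)

lemma qmul_nz: "p \<noteq> 0 \<Longrightarrow> q \<noteq> 0 \<Longrightarrow> qmul p q \<noteq> 0"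
  by (metis qinv_left qmul_assoc qmul_qone_left qmul_zero_right)


lemma N_eq: "hs_N b0 = (\<lambda>z. (\<i> * cr (cos (2*pi*(b0 \<bullet> z))), \<i> * cr (sin (2*pi*(b0 \<bullet> z)))))"
  by (auto simp: hs_N_def qmul_def qexpj_def qi_def hs_beta_def)

lemma N_deriv: "(hs_N b0 has_derivative (\<lambda>v. (- \<i> * cr (sin (hs_beta b0 z)) * cr (2*pi*(b0 \<bullet> v)),
     \<i> * cr (cos (hs_beta b0 z)) * cr (2*pi*(b0 \<bullet> v))))) (at z)"
  unfolding N_eq hs_beta_def
  by (rule has_derivative_eq_rhs, (rule derivative_eq_intros refl)+, auto simp: algebra_simps)

lemma beta_double: "hs_beta b0 z = 2 * (pi * (b0 \<bullet> z))"
  by (simp add: hs_beta_def)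

lemma cos_beta: "cos (hs_beta b0 z) = (cos (pi * (b0 \<bullet> z)))^2 - (sin (pi * (b0 \<bullet> z)))^2"
  unfolding beta_double by (rule cos_double)

lemma sin_beta: "sin (hs_beta b0 z) = 2 * sin (pi * (b0 \<bullet> z)) * cos (pi * (b0 \<bullet> z))"
  unfolding beta_double by (rule sin_double)

lemma N_form: "hs_N b0 z = (\<i> * cr ((cos (pi * (b0 \<bullet> z)))^2 - (sin (pi * (b0 \<bullet> z)))^2),
    \<i> * cr (2 * sin (pi * (b0 \<bullet> z)) * cos (pi * (b0 \<bullet> z))))"
  using cos_beta[of b0 z] sin_beta[of b0 z] by (simp add: hs_N_def qmul_def qexpj_def qi_def)

lemma qexpj_half: "qexpj (hs_beta b0 z / 2) = (cr (cos (pi * (b0 \<bullet> z))), cr (sin (pi * (b0 \<bullet> z))))"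
  by (simp add: qexpj_def hs_beta_def)

lemma dNp: "dN_prime b0 z v = - qmul (qmul (cr (cos (pi * (b0 \<bullet> z))), cr (sin (pi * (b0 \<bullet> z)))) (v,0))
    (cr pi * \<i> * cnj b0 * cr (sin (pi * (b0 \<bullet> z))), - cr pi * \<i> * b0 * cr (cos (pi * (b0 \<bullet> z))))"
proof -
  have fd: "frechet_derivative (hs_N b0) (at z) = (\<lambda>v. (- \<i> * cr (sin (hs_beta b0 z)) * cr (2*pi*(b0 \<bullet> v)),
     \<i> * cr (cos (hs_beta b0 z)) * cr (2*pi*(b0 \<bullet> v))))"
    using frechet_derivative_at[OF N_deriv] by simp
  have cs: "(cos (pi * (b0 \<bullet> z)))^2 + (sin (pi * (b0 \<bullet> z)))^2 = 1" by simp
  show ?thesis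
    unfolding dN_prime_def hodge_def dform_def fd N_form cos_beta sin_beta
    using dNp_alg[OF cs, of b0 v] by simp
qed


lemma H_prop:
  assumes fd: "(f has_derivative (\<lambda>v. qmul (qmul (qexpj (hs_beta b0 z / 2)) (of_cplx v)) (g z))) (at z)"
    and gz: "g z \<noteq> 0"
  shows "qmul (dform f z v) (hs_H b0 f z) = qmul (qmul (cr (cos (pi * (b0 \<bullet> z))), cr (sin (pi * (b0 \<bullet> z)))) (v,0))
    (cr pi * \<i> * cnj b0 * cr (sin (pi * (b0 \<bullet> z))), - cr pi * \<i> * b0 * cr (cos (pi * (b0 \<bullet> z))))"
proof -
  define E where "E = (cr (cos (pi * (b0 \<bullet> z))), cr (sin (pi * (b0 \<bullet> z))))"
  define X where "X = (cr pi * \<i> * cnj b0 * cr (sin (pi * (b0 \<bullet> z))), - cr pi * \<i> * b0 * cr (cos (pi * (b0 \<bullet> z))))"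
  have fr: "frechet_derivative f (at z) = (\<lambda>v. qmul (qmul (qexpj (hs_beta b0 z / 2)) (of_cplx v)) (g z))"
    using frechet_derivative_at[OF fd] by simp
  have df: "dform f z w = qmul (qmul E (w,0)) (g z)" for w
    unfolding dform_def fr E_def qexpj_half of_cplx_def by simp
  define h0 where "h0 = qmul (qinv (g z)) X"
  have P: "qmul (dform f z w) h0 = qmul (qmul E (w,0)) X" for w
  proof -
    have "qmul (qmul (qmul E (w,0)) (g z)) (qmul (qinv (g z)) X) = qmul (qmul E (w,0)) (qmul (qmul (g z) (qinv (g z))) X)"
      by (simp only: qmul_assoc)
    thus ?thesis unfolding df h0_def qinv_right[OF gz] by simp
  qed
  have dN: "dN_prime b0 z w = - qmul (qmul E (w,0)) X" for w
    unfolding E_def X_def by (rule dNp)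
  have Enz: "E \<noteq> 0"
  proof
    assume "E = 0"
    hence "cos (pi * (b0 \<bullet> z)) = 0 \<and> sin (pi * (b0 \<bullet> z)) = 0" by (simp add: E_def zero_prod_def)
    thus False using sin_cos_squared_add[of "pi * (b0 \<bullet> z)"] by simp
  qed
  have E1: "qmul E (1,0) = E" by (simp add: qmul_def)
  have d1: "dform f z 1 \<noteq> 0" unfolding df E1 by (rule qmul_nz[OF Enz gz])
  have "hs_H b0 f z = h0"
    unfolding hs_H_def
  proof (rule the_equality)
    show "\<forall>w. dN_prime b0 z w = - qmul (dform f z w) h0" using P dN by simp
  next
    fix h assume "\<forall>w. dN_prime b0 z w = - qmul (dform f z w) h"
    hence "qmul (dform f z 1) h = qmul (dform f z 1) h0" using P dN by (metis minus_equation_iff)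
    thus "h = h0" by (rule qmul_cancel[OF d1])
  qed
  thus ?thesis using P unfolding E_def X_def by simp
qed

lemma key:
  assumes fd: "\<forall>z. (f has_derivative (\<lambda>v. qmul (qmul (qexpj (hs_beta b0 z / 2)) (of_cplx v)) (g z))) (at z)"
    and gnz: "\<forall>z. g z \<noteq> 0"
  shows "d_mu b0 f mu (alx l b0 D A c) z v
     = dexpr (cos (pi * (b0 \<bullet> z))) (sin (pi * (b0 \<bullet> z))) b0 D A l mu (phi D A c z) v"
proof -
  have H: "qmul (dform f z v) (hs_H b0 f z) = qmul (qmul (cr (cos (pi * (b0 \<bullet> z))), cr (sin (pi * (b0 \<bullet> z)))) (v,0))
    (cr pi * \<i> * cnj b0 * cr (sin (pi * (b0 \<bullet> z))), - cr pi * \<i> * b0 * cr (cos (pi * (b0 \<bullet> z))))"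
    using H_prop fd gnz by blast
  have da: "dform (alx l b0 D A c) z v = 
   ((- cr (sin (pi * (b0 \<bullet> z))) * cr pi * cr (b0 \<bullet> v) - \<i> * l * (cr (cos (pi * (b0 \<bullet> z))) * cr pi * cr (b0 \<bullet> v))) * phi D A c z
      + (cr (cos (pi * (b0 \<bullet> z))) - \<i> * l * cr (sin (pi * (b0 \<bullet> z)))) * (phi D A c z * (2 * cr pi * \<i> * cr (D \<bullet> v) + 2 * cr pi * cr (A \<bullet> v))),
    (\<i> * l * (- cr (sin (pi * (b0 \<bullet> z))) * cr pi * cr (b0 \<bullet> v)) + cr (cos (pi * (b0 \<bullet> z))) * cr pi * cr (b0 \<bullet> v)) * phi D A c z
      + (\<i> * l * cr (cos (pi * (b0 \<bullet> z))) + cr (sin (pi * (b0 \<bullet> z)))) * (phi D A c z * (2 * cr pi * \<i> * cr (D \<bullet> v) + 2 * cr pi * cr (A \<bullet> v))))"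
    unfolding dform_def frechet_derivative_at[OF alx_deriv, symmetric] by simp
  show ?thesis
    unfolding d_mu_def H da dexpr_def Let_def N_form
    by (simp add: alx_def)
qed


theorem lemma5p3:
  fixes \<Gamma> :: "complex set" and \<beta>0 :: complex and f g \<alpha> :: "complex \<Rightarrow> quat"
  assumes "ham_stat_torus \<Gamma> \<beta>0 f g"
    and "monochromatic \<Gamma> \<beta>0 \<alpha>"
  shows "\<exists>!\<mu>. \<mu> \<noteq> 0 \<and> d_mu_parallel \<beta>0 f \<mu> \<alpha>"
proof -
  from assms(1) have b0: "\<beta>0 \<noteq> 0" and gnz: "\<forall>z. g z \<noteq> 0"
    and fd: "\<forall>z. (f has_derivative (\<lambda>v. qmul (qmul (qexpj (hs_beta \<beta>0 z / 2)) (of_cplx v)) (g z))) (at z)"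
    by (simp_all add: ham_stat_torus_def)
  from assms(2) obtain A B \<delta> c where dG: "\<delta> \<in> Gamma_AB \<Gamma> \<beta>0 A B" and c: "c \<noteq> 0"
    and aeq: "\<alpha> = (\<lambda>z. qmul (qmul (qmul (qmul (qexpj (hs_beta \<beta>0 z / 2))
                     (qone - qmul qk (of_cplx (lambda_delta \<beta>0 A B \<delta>))))
                     (of_cplx (e_char (\<delta> - B) z)))
                     (of_cplx (complex_of_real (exp (2 * pi * (A \<bullet> z))))))
                     (of_cplx c))"
    unfolding monochromatic_def by blast
  define D where "D = \<delta> - B"
  define l where "l = lambda_delta \<beta>0 A B \<delta>"
  from dG have nD: "(cmod D)^2 - (cmod A)^2 = (cmod \<beta>0)^2 / 4" and ip: "D \<bullet> A = 0"
    by (simp_all add: Gamma_AB_def D_def)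
  have lb: "l * \<beta>0 = 2 * (D - \<i> * A)"
    using b0 by (simp add: l_def lambda_delta_def D_def field_simps)
  have nD': "D * cnj D - A * cnj A = \<beta>0 * cnj \<beta>0 / 4"
  proof -
    have "cr ((cmod D)^2) - cr ((cmod A)^2) = cr ((cmod \<beta>0)^2) / 4"
      using arg_cong[OF nD, of cr] by (simp only: of_real_diff of_real_divide of_real_numeral)
    thus ?thesis by (simp only: complex_norm_square)
  qed
  have ip': "D * cnj A + cnj D * A = 0"
    using arg_cong[OF ip, of cr] by (simp add: cinner)
  have E: "(D - \<i> * A) * (cnj D - \<i> * cnj A) = \<beta>0 * cnj \<beta>0 / 4"
  proof -
    have i2: "\<i> * \<i> = -1" by simp
    have "(D - \<i> * A) * (cnj D - \<i> * cnj A) = (D * cnj D - A * cnj A) - \<i> * (D * cnj A + cnj D * A)"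
      using i2 by algebra
    thus ?thesis using nD' ip' by simp
  qed
  have l0: "l \<noteq> 0"
  proof
    assume "l = 0"
    hence "D = \<i> * A" using lb by simp
    hence "cmod D = cmod A" by (simp add: norm_mult)
    hence "cmod \<beta>0 = 0" using nD by simp
    thus False using b0 by simp
  qed
  have aeq2: "\<alpha> = alx l \<beta>0 D A c"
    unfolding aeq
  proof
    fix z
    show "qmul (qmul (qmul (qmul (qexpj (hs_beta \<beta>0 z / 2))
                     (qone - qmul qk (of_cplx (lambda_delta \<beta>0 A B \<delta>))))
                     (of_cplx (e_char (\<delta> - B) z)))
                     (of_cplx (complex_of_real (exp (2 * pi * (A \<bullet> z))))))
                     (of_cplx c) = alx l \<beta>0 D A c z"
      unfolding qexpj_half alx_def phi_def l_def[symmetric] D_def[symmetric]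
      by (simp add: qmul_def qone_def qk_def qi_def qj_def of_cplx_def algebra_simps)
  qed
  have diff: "\<forall>z. alx l \<beta>0 D A c differentiable (at z)"
    using alx_deriv differentiableI by blast
  define mu0 where "mu0 = inverse (l^2)"
  have mu0: "mu0 * l^2 = 1" using l0 by (simp add: mu0_def)
  show ?thesis
  proof (rule ex1I[of _ mu0])
    show "mu0 \<noteq> 0 \<and> d_mu_parallel \<beta>0 f mu0 \<alpha>"
      unfolding aeq2 d_mu_parallel_def
      using l0 diff key[OF fd gnz] dmu_alg[OF _ lb E mu0 b0] by (simp add: mu0_def)
  next
    fix mu assume "mu \<noteq> 0 \<and> d_mu_parallel \<beta>0 f mu \<alpha>"
    hence mu: "mu \<noteq> 0" and "d_mu \<beta>0 f mu \<alpha> 0 1 = 0" by (auto simp: d_mu_parallel_def)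
    hence "dexpr 1 0 \<beta>0 D A l mu (phi D A c 0) 1 = 0"
      using key[OF fd gnz, of mu l D A c 0 1] unfolding aeq2 by simp
    hence "snd (dexpr 1 0 \<beta>0 D A l mu (phi D A c 0) 1) = 0" by simp
    hence "cr pi * c * \<beta>0 * (inverse mu - l^2) / 2 = 0"
      unfolding uniq_alg[OF lb E b0] by (simp add: phi_def e_char_def)
    hence "inverse mu = l^2" using c b0 by simp
    thus "mu = mu0" unfolding mu0_def by (metis inverse_inverse_eq)
  qed
qed

end
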